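(* Fix $x_1\in\mathbb R^d$, $B\in\mathbb R^{d\times d}$ and $q\ge1$. Then $$\mathbb E_{-1}[p_{12}^q]\le\frac1{(n-1)^q}\exp\left(\frac{q^2}2x_1^\top B\Sigma B^\top x_1\right),$$ $$\mathbb E_{-1}[p_{11}^q]\le\frac1{(n-1)^q}\exp(qx_1^\top Bx_1)\exp\left(\frac{q^2}{2(n-1)}x_1^\top B\Sigma B^\top x_1\right).$$
   Context: $n\ge2$; $\Sigma\in\mathbb R^{d\times d}$ symmetric positive semidefinite; $x_2,\dots,x_n$ i.i.d. $\mathcal N(0,\Sigma)$ and $\mathbb E_{-1}$ denotes expectation over $x_2,\dots,x_n$ with $x_1$ held fixed. Softmax weights: $p_{1j}=\dfrac{\exp(x_1^\top Bx_j)}{\sum_{k=1}^n\exp(x_1^\top Bx_k)}$ for $j=1,\dots,n$. *)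

theory Defs
  imports "HOL-Probability.Probability"
begin

definition centered_gaussian :: "real \<Rightarrow> real measure" where
  "centered_gaussian v =
     (if v = 0 then return borel 0 else density lborel (normal_density 0 (sqrt v)))"

text \<open>A random vector X on M has law N(0, S) (Cramer--Wold definition): every linear
  functional u . X is a centered real Gaussian with variance u^T S u.\<close>
definition gaussian_vector ::
  "'a measure \<Rightarrow> ('a \<Rightarrow> real ^ 'd) \<Rightarrow> real ^ 'd ^ 'd \<Rightarrow> bool" where
  "gaussian_vector M X S \<longleftrightarrow>
     X \<in> borel_measurable M \<and>
     (\<forall>u. distr M borel (\<lambda>\<omega>. u \<bullet> X \<omega>) = centered_gaussian (u \<bullet> (S *v u)))"

text \<open>Softmax weights p_{1j} for the query x1, with random keys X 2, ..., X n
  (the key of index 1 is x1 itself).\<close>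
definition softmax_weight ::
  "real ^ 'd ^ 'd \<Rightarrow> real ^ 'd \<Rightarrow> (nat \<Rightarrow> real ^ 'd) \<Rightarrow> nat \<Rightarrow> nat \<Rightarrow> real" where
  "softmax_weight B x1 xs n j =
     exp (x1 \<bullet> (B *v xs j)) / (\<Sum>k\<in>{1..n}. exp (x1 \<bullet> (B *v xs k)))"

end

theory Submission imports Defs begin

lemma dot_transpose: "(x::real^'d) \<bullet> (B *v y) = (transpose B *v x) \<bullet> y"
proof -
  have "x \<bullet> (B *v y) = (\<Sum>i\<in>UNIV. \<Sum>j\<in>UNIV. x$i * (B$i$j * y$j))"
    by (simp add: inner_vec_def matrix_vector_mult_def sum_distrib_left)
  also have "\<dots> = (\<Sum>j\<in>UNIV. \<Sum>i\<in>UNIV. x$i * (B$i$j * y$j))"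
    by (rule sum.swap)
  also have "\<dots> = (transpose B *v x) \<bullet> y"
    by (simp add: inner_vec_def matrix_vector_mult_def vector_matrix_mult_def transpose_def sum_distrib_right sum_distrib_left mult.commute mult.left_commute)
  finally show ?thesis .
qed

lemma e1: assumes "(s::real) > 0" shows "- ((x - 0)\<^sup>2) / (2 * s) + c * x = c\<^sup>2 * s / 2 + (- ((x - c * s)\<^sup>2) / (2 * s))"
  using assms by (simp add: field_simps power2_eq_square)
lemma nd_eq:
  assumes sp: "\<sigma> > 0" and s2: "\<sigma>\<^sup>2 = s"
  shows "normal_density 0 \<sigma> x * exp (c*x) = exp (c\<^sup>2 * s / 2) * normal_density (c*\<sigma>\<^sup>2) \<sigma> x"
proof -
  have spos: "s > 0" using sp s2 by auto
  have e: "- ((x - 0)\<^sup>2) / (2 * \<sigma>\<^sup>2) + c * x = c\<^sup>2 * s / 2 + (- ((x - c * \<sigma>\<^sup>2)\<^sup>2) / (2 * \<sigma>\<^sup>2))"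
    unfolding s2 by (rule e1[OF spos])
  have ee: "exp (- ((x - 0)\<^sup>2) / (2 * \<sigma>\<^sup>2)) * exp (c * x) = exp (c\<^sup>2 * s / 2) * exp (- ((x - c * \<sigma>\<^sup>2)\<^sup>2) / (2 * \<sigma>\<^sup>2))"
    by (simp only: exp_add[symmetric] e)
  have "normal_density 0 \<sigma> x * exp (c*x) = 1 / sqrt (2 * pi * \<sigma>\<^sup>2) * (exp (- ((x - 0)\<^sup>2) / (2 * \<sigma>\<^sup>2)) * exp (c * x))"
    by (simp only: normal_density_def mult.assoc)
  also have "\<dots> = 1 / sqrt (2 * pi * \<sigma>\<^sup>2) * (exp (c\<^sup>2 * s / 2) * exp (- ((x - c * \<sigma>\<^sup>2)\<^sup>2) / (2 * \<sigma>\<^sup>2)))"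
    by (simp only: ee)
  also have "\<dots> = exp (c\<^sup>2 * s / 2) * normal_density (c*\<sigma>\<^sup>2) \<sigma> x"
    unfolding normal_density_def by (rule mult.left_commute)
  finally show ?thesis .
qed

lemma mgf_cg:
  assumes "0 \<le> s"
  shows "integrable (centered_gaussian s) (\<lambda>x. exp (c*x)) \<and>
         integral\<^sup>L (centered_gaussian s) (\<lambda>x. exp (c*x)) = exp (c\<^sup>2 * s / 2)"
proof (cases "s = 0")
  case True
  have "prob_space (return borel (0::real))" by (simp add: prob_space_return)
  then have "integrable (return borel 0) (\<lambda>x::real. exp(c*x))"
    by (intro finite_measure.integrable_const_bound[where B=1])
       (auto simp: AE_return prob_space.finite_measure)
  then show ?thesis using True by (simp add: centered_gaussian_def integral_return)
next
  case False
  define \<sigma> where "\<sigma> = sqrt s"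
  have sp: "\<sigma> > 0" using assms False by (simp add: \<sigma>_def)
  have s2: "\<sigma>\<^sup>2 = s" using assms by (simp add: \<sigma>_def)
  have hb: "has_bochner_integral lborel (\<lambda>x. normal_density 0 \<sigma> x *\<^sub>R exp (c*x)) (exp (c\<^sup>2 * s / 2))"
  proof -
    have "has_bochner_integral lborel (\<lambda>x. exp (c\<^sup>2 * s / 2) * normal_density (c*\<sigma>\<^sup>2) \<sigma> x) (exp (c\<^sup>2 * s / 2) * 1)"
    proof (intro has_bochner_integral_mult_right)
      have i1: "integrable lborel (normal_density (c*\<sigma>\<^sup>2) \<sigma>)" by (rule integrable_normal_density) (fact sp)
      have i2: "integral\<^sup>L lborel (normal_density (c*\<sigma>\<^sup>2) \<sigma>) = 1" by (rule integral_normal_density) (fact sp)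
      show "has_bochner_integral lborel (normal_density (c*\<sigma>\<^sup>2) \<sigma>) 1"
        using i1 i2 has_bochner_integral_iff by blast
    qed
    then show ?thesis using nd_eq[OF sp s2] by simp
  qed
  have "has_bochner_integral (centered_gaussian s) (\<lambda>x. exp (c*x)) (exp (c\<^sup>2 * s / 2))"
    unfolding centered_gaussian_def using False
    by (simp add: \<sigma>_def[symmetric]) (rule has_bochner_integral_density, auto simp: hb[simplified])
  then show ?thesis by (simp add: has_bochner_integral_iff)
qed

lemma mgf_rv:
  assumes "Y \<in> borel_measurable M" "distr M borel Y = centered_gaussian s" "0 \<le> s"
  shows "integrable M (\<lambda>\<omega>. exp (c * Y \<omega>)) \<and> integral\<^sup>L M (\<lambda>\<omega>. exp (c * Y \<omega>)) = exp (c\<^sup>2 * s / 2)"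
  using mgf_cg[OF assms(3), of c] integrable_distr_eq[of Y M borel "\<lambda>x. exp(c*x)"]
    integral_distr[of Y M borel "\<lambda>x. exp(c*x)"] assms by simp

lemma amgm:
  fixes y :: "nat \<Rightarrow> real"
  assumes "finite K" "K \<noteq> {}"
  shows "real (card K) * exp ((\<Sum>k\<in>K. y k) / real (card K)) \<le> (\<Sum>k\<in>K. exp (y k))"
proof -
  define m where "m = real (card K)"
  have mp: "m > 0" using assms by (simp add: m_def card_gt_0_iff)
  have "exp (\<Sum>k\<in>K. (1/m) *\<^sub>R y k) \<le> (\<Sum>k\<in>K. (1/m) * exp (y k))"
    by (rule convex_on_sum[OF assms exp_convex]) (use mp in \<open>auto simp: m_def\<close>)
  then have "exp ((\<Sum>k\<in>K. y k) / m) \<le> (\<Sum>k\<in>K. exp (y k)) / m"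
    by (simp add: sum_distrib_left[symmetric] sum_divide_distrib[symmetric])
  then show ?thesis using mp unfolding m_def[symmetric] by (simp add: field_simps)
qed

lemma indep_prod:
  assumes "prob_space M" "finite K" "prob_space.indep_vars M (\<lambda>_. borel) X K"
    and "\<forall>k\<in>K. gaussian_vector M (X k) S" "0 \<le> u \<bullet> (S *v u)"
  shows "integrable M (\<lambda>\<omega>. \<Prod>k\<in>K. exp (c k * (u \<bullet> X k \<omega>))) \<and>
    integral\<^sup>L M (\<lambda>\<omega>. \<Prod>k\<in>K. exp (c k * (u \<bullet> X k \<omega>))) = exp ((u \<bullet> (S *v u)) / 2 * (\<Sum>k\<in>K. (c k)\<^sup>2))"
proof -
  interpret prob_space M by fact
  have ind: "indep_vars (\<lambda>_. borel) (\<lambda>k \<omega>. (\<lambda>x. exp (c k * (u \<bullet> x))) (X k \<omega>)) K"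
    by (rule indep_vars_compose2[OF assms(3)]) simp
  have each: "integrable M (\<lambda>\<omega>. exp (c k * (u \<bullet> X k \<omega>))) \<and>
     integral\<^sup>L M (\<lambda>\<omega>. exp (c k * (u \<bullet> X k \<omega>))) = exp ((c k)\<^sup>2 * (u \<bullet> (S *v u)) / 2)" if "k \<in> K" for k
  proof -
    have g: "gaussian_vector M (X k) S" using assms(4) that by auto
    then have "X k \<in> borel_measurable M" by (simp add: gaussian_vector_def)
    then have "(\<lambda>\<omega>. u \<bullet> X k \<omega>) \<in> borel_measurable M" by measurable
    then show ?thesis using mgf_rv[of "\<lambda>\<omega>. u \<bullet> X k \<omega>" M "u \<bullet> (S *v u)" "c k"] g assms(5)
      by (simp add: gaussian_vector_def)
  qed
  have "integrable M (\<lambda>\<omega>. \<Prod>k\<in>K. exp (c k * (u \<bullet> X k \<omega>)))"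
    using indep_vars_integrable[OF assms(2) ind] each by simp
  moreover have "integral\<^sup>L M (\<lambda>\<omega>. \<Prod>k\<in>K. exp (c k * (u \<bullet> X k \<omega>))) = (\<Prod>k\<in>K. exp ((c k)\<^sup>2 * (u \<bullet> (S *v u)) / 2))"
    using indep_vars_lebesgue_integral[OF assms(2) ind] each by simp
  moreover have "(\<Prod>k\<in>K. exp ((c k)\<^sup>2 * (u \<bullet> (S *v u)) / 2)) = exp ((u \<bullet> (S *v u)) / 2 * (\<Sum>k\<in>K. (c k)\<^sup>2))"
    by (simp add: exp_sum[symmetric] assms(2) sum_distrib_left mult_ac)
  ultimately show ?thesis by simp
qed


theorem lemma9:
  fixes M :: "'a measure" and X :: "nat \<Rightarrow> 'a \<Rightarrow> real ^ 'd"
    and \<Sigma> B :: "real ^ 'd ^ 'd" and x1 :: "real ^ 'd" and n :: nat and q :: real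
  assumes "prob_space M"
    and "n \<ge> 2"
    and "transpose \<Sigma> = \<Sigma>"
    and "\<forall>v. 0 \<le> v \<bullet> (\<Sigma> *v v)"
    and "prob_space.indep_vars M (\<lambda>_. borel) X {2..n}"
    and "\<forall>j\<in>{2..n}. gaussian_vector M (X j) \<Sigma>"
    and "q \<ge> 1"
  shows "(prob_space.expectation M
           (\<lambda>\<omega>. softmax_weight B x1 ((\<lambda>j. X j \<omega>)(1 := x1)) n 2 powr q)
         \<le> 1 / (real n - 1) powr q
             * exp (q\<^sup>2 / 2 * ((transpose B *v x1) \<bullet> (\<Sigma> *v (transpose B *v x1))))) \<and>
         (prob_space.expectation M
           (\<lambda>\<omega>. softmax_weight B x1 ((\<lambda>j. X j \<omega>)(1 := x1)) n 1 powr q)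
         \<le> 1 / (real n - 1) powr q * exp (q * (x1 \<bullet> (B *v x1)))
             * exp (q\<^sup>2 / (2 * (real n - 1))
                    * ((transpose B *v x1) \<bullet> (\<Sigma> *v (transpose B *v x1)))))"
proof -
  define u where "u = transpose B *v x1"
  define s where "s = u \<bullet> (\<Sigma> *v u)"
  define a where "a = x1 \<bullet> (B *v x1)"
  define K where "K = {2..n}"
  define m where "m = real n - 1"
  define Y where "Y k \<omega> = u \<bullet> X k \<omega>" for k \<omega>
  define S where "S \<omega> = (\<Sum>k\<in>K. exp (Y k \<omega>))" for \<omega>
  define Yb where "Yb \<omega> = (\<Sum>k\<in>K. Y k \<omega>) / m" for \<omega>
  have s0: "0 \<le> s" using assms(4) by (simp add: s_def)
  have fK: "finite K" and K2: "2 \<in> K" and Kne: "K \<noteq> {}" using assms(2) by (auto simp: K_def)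
  have cardK: "real (card K) = m" using assms(2) by (simp add: K_def m_def of_nat_diff)
  have m1: "m \<ge> 1" using assms(2) by (simp add: m_def)
  have m0: "m \<ge> 0" using m1 by simp
  have q0: "q \<ge> 0" using assms(7) by simp
  have Sge: "S \<omega> \<ge> m * exp (Yb \<omega>)" for \<omega>
    using amgm[OF fK Kne, of "\<lambda>k. Y k \<omega>"] cardK by (simp add: S_def Yb_def)
  have Spos: "S \<omega> > 0" for \<omega>
    using Sge[of \<omega>] m1 by (smt (verit) exp_gt_zero mult_pos_pos)
  have xY: "x1 \<bullet> (B *v X k \<omega>) = Y k \<omega>" for k \<omega>
    unfolding Y_def u_def by (rule dot_transpose)
  have den: "(\<Sum>k\<in>{1..n}. exp (x1 \<bullet> (B *v ((\<lambda>j. X j \<omega>)(1 := x1)) k))) = exp a + S \<omega>" for \<omega>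
  proof -
    have "{1..n} = insert 1 K" using assms(2) by (auto simp: K_def)
    moreover have "1 \<notin> K" by (simp add: K_def)
    ultimately have "(\<Sum>k\<in>{1..n}. exp (x1 \<bullet> (B *v ((\<lambda>j. X j \<omega>)(1 := x1)) k))) =
       exp a + (\<Sum>k\<in>K. exp (x1 \<bullet> (B *v ((\<lambda>j. X j \<omega>)(1 := x1)) k)))"
      using fK by (simp add: a_def)
    also have "(\<Sum>k\<in>K. exp (x1 \<bullet> (B *v ((\<lambda>j. X j \<omega>)(1 := x1)) k))) = S \<omega>"
      unfolding S_def by (intro sum.cong refl) (auto simp: K_def xY)
    finally show ?thesis .
  qed
  have mq: "m powr q > 0" using m1 by simp
  have exppowr: "exp x powr q = exp (q * x)" for x by (simp add: powr_def)
  have prodexp: "(\<Prod>k\<in>K. exp (c k * Y k \<omega>)) = exp (\<Sum>k\<in>K. c k * Y k \<omega>)" for c \<omega>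
    by (simp add: exp_sum fK)
  have rv: "\<forall>k\<in>K. gaussian_vector M (X k) \<Sigma>" using assms(6) by (simp add: K_def)
  have indK: "prob_space.indep_vars M (\<lambda>_. borel) X K" using assms(5) by (simp add: K_def)
  note IP = indep_prod[OF assms(1) fK indK rv s0[unfolded s_def]]
  interpret prob_space M by fact
  have gen: "expectation f \<le> C * exp (s / 2 * (\<Sum>k\<in>K. (c k)\<^sup>2))"
    if fle: "\<And>\<omega>. f \<omega> \<le> C * (\<Prod>k\<in>K. exp (c k * Y k \<omega>))" and C0: "C \<ge> 0" for f c C
  proof (cases "integrable M f")
    case True
    have "expectation f \<le> expectation (\<lambda>\<omega>. C * (\<Prod>k\<in>K. exp (c k * Y k \<omega>)))"
      using IP[of c] True fle by (intro integral_mono) (auto simp: Y_def)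
    also have "\<dots> = C * exp (s / 2 * (\<Sum>k\<in>K. (c k)\<^sup>2))"
      using IP[of c] by (simp add: Y_def s_def)
    finally show ?thesis .
  next
    case False
    then show ?thesis using C0 by (simp add: not_integrable_integral_eq)
  qed
  define c1 where "c1 k = (if k = 2 then q - q / m else - (q / m))" for k :: nat
  have sum_c1Y: "(\<Sum>k\<in>K. c1 k * Y k \<omega>) = q * Y 2 \<omega> - q * Yb \<omega>" for \<omega>
  proof -
    have "(\<Sum>k\<in>K. c1 k * Y k \<omega>) = (\<Sum>k\<in>K. (if k = 2 then q * Y k \<omega> else 0) - q / m * Y k \<omega>)"
      by (intro sum.cong refl) (auto simp: c1_def algebra_simps)
    also have "\<dots> = q * Y 2 \<omega> - q * Yb \<omega>"
      using fK K2 by (simp add: sum_subtractf sum_divide_distrib[symmetric] sum_distrib_left[symmetric] Yb_def)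
    finally show ?thesis .
  qed
  have sum_c1sq: "(\<Sum>k\<in>K. (c1 k)\<^sup>2) \<le> q\<^sup>2"
  proof -
    have "(\<Sum>k\<in>K. (c1 k)\<^sup>2) = (c1 2)\<^sup>2 + (\<Sum>k\<in>K - {2}. (c1 k)\<^sup>2)"
      using fK K2 by (simp add: sum.remove)
    also have "(\<Sum>k\<in>K - {2}. (c1 k)\<^sup>2) = real (card (K - {2})) * (q / m)\<^sup>2"
      by (simp add: c1_def)
    also have "real (card (K - {2})) = m - 1"
    proof -
      have "card K \<ge> 1" using fK K2 card_gt_0_iff[of K] by fastforce
      then show ?thesis using fK K2 cardK by (simp add: of_nat_diff)
    qed
    also have "(c1 2)\<^sup>2 + (m - 1) * (q / m)\<^sup>2 = q\<^sup>2 - q\<^sup>2 / m"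
      using m1 by (simp add: c1_def field_simps power2_eq_square)
    finally have "(\<Sum>k\<in>K. (c1 k)\<^sup>2) = q\<^sup>2 - q\<^sup>2 / m" .
    then show ?thesis using m1 by (simp add: divide_nonneg_pos)
  qed
  have part1: "expectation (\<lambda>\<omega>. softmax_weight B x1 ((\<lambda>j. X j \<omega>)(1 := x1)) n 2 powr q)
      \<le> 1 / m powr q * exp (s / 2 * (\<Sum>k\<in>K. (c1 k)\<^sup>2))"
  proof (rule gen)
    fix \<omega>
    have sw: "softmax_weight B x1 ((\<lambda>j. X j \<omega>)(1 := x1)) n 2 = exp (Y 2 \<omega>) / (exp a + S \<omega>)"
      unfolding softmax_weight_def den by (simp add: xY)
    have "exp (Y 2 \<omega>) / (exp a + S \<omega>) \<le> exp (Y 2 \<omega>) / (m * exp (Yb \<omega>))"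
      using Sge[of \<omega>] m1 by (intro frac_le) (auto intro: add_pos_pos, smt (verit) exp_gt_zero)
    also have "\<dots> = exp (Y 2 \<omega> - Yb \<omega>) / m" by (simp add: exp_diff)
    finally have le: "(exp (Y 2 \<omega>) / (exp a + S \<omega>)) powr q \<le> (exp (Y 2 \<omega> - Yb \<omega>) / m) powr q"
      using q0 Spos[of \<omega>] by (intro powr_mono2) (auto intro: add_pos_pos less_imp_le)
    also have "\<dots> = exp (Y 2 \<omega> - Yb \<omega>) powr q / m powr q"
      by (rule powr_divide)
    also have "\<dots> = exp (q * Y 2 \<omega> - q * Yb \<omega>) / m powr q"
      by (simp only: exppowr right_diff_distrib)
    also have "\<dots> = 1 / m powr q * (\<Prod>k\<in>K. exp (c1 k * Y k \<omega>))"
      unfolding prodexp sum_c1Y by simp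
    finally show "softmax_weight B x1 ((\<lambda>j. X j \<omega>)(1 := x1)) n 2 powr q
         \<le> 1 / m powr q * (\<Prod>k\<in>K. exp (c1 k * Y k \<omega>))" unfolding sw .
  qed simp
  also have "\<dots> \<le> 1 / m powr q * exp (q\<^sup>2 / 2 * s)"
  proof -
    have "s / 2 * (\<Sum>k\<in>K. (c1 k)\<^sup>2) \<le> s / 2 * q\<^sup>2"
      by (rule mult_left_mono[OF sum_c1sq]) (use s0 in simp)
    then have "exp (s / 2 * (\<Sum>k\<in>K. (c1 k)\<^sup>2)) \<le> exp (q\<^sup>2 / 2 * s)"
      by (simp add: mult.commute)
    then show ?thesis by (rule mult_left_mono) simp
  qed
  finally have P1: "expectation (\<lambda>\<omega>. softmax_weight B x1 ((\<lambda>j. X j \<omega>)(1 := x1)) n 2 powr q)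
      \<le> 1 / m powr q * exp (q\<^sup>2 / 2 * s)" .
  define c2 where "c2 k = - (q / m)" for k :: nat
  have sum_c2sq: "(\<Sum>k\<in>K. (c2 k)\<^sup>2) = q\<^sup>2 / m"
    using cardK m1 by (simp add: c2_def power2_eq_square)
  have part2: "expectation (\<lambda>\<omega>. softmax_weight B x1 ((\<lambda>j. X j \<omega>)(1 := x1)) n 1 powr q)
      \<le> 1 / m powr q * exp (q * a) * exp (s / 2 * (\<Sum>k\<in>K. (c2 k)\<^sup>2))"
  proof (rule gen)
    fix \<omega>
    have sw: "softmax_weight B x1 ((\<lambda>j. X j \<omega>)(1 := x1)) n 1 = exp a / (exp a + S \<omega>)"
      unfolding softmax_weight_def den by (simp add: a_def)
    have "exp a / (exp a + S \<omega>) \<le> exp a / (m * exp (Yb \<omega>))"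
      using Sge[of \<omega>] m1 by (intro frac_le) (auto intro: add_pos_pos, smt (verit) exp_gt_zero)
    also have "\<dots> = exp (a - Yb \<omega>) / m" by (simp add: exp_diff)
    finally have le: "(exp a / (exp a + S \<omega>)) powr q \<le> (exp (a - Yb \<omega>) / m) powr q"
      using q0 Spos[of \<omega>] by (intro powr_mono2) (auto intro: add_pos_pos less_imp_le)
    also have "\<dots> = exp (a - Yb \<omega>) powr q / m powr q"
      by (rule powr_divide)
    also have "\<dots> = exp (q * a - q * Yb \<omega>) / m powr q"
      by (simp only: exppowr right_diff_distrib)
    also have "q * Yb \<omega> = - (\<Sum>k\<in>K. c2 k * Y k \<omega>)"
      by (simp add: c2_def Yb_def sum_negf sum_distrib_left[symmetric] sum_divide_distrib[symmetric])
    also have "exp (q * a - - (\<Sum>k\<in>K. c2 k * Y k \<omega>)) / m powr q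
       = 1 / m powr q * exp (q * a) * exp (\<Sum>k\<in>K. c2 k * Y k \<omega>)"
      by (simp add: exp_add)
    also have "\<dots> = 1 / m powr q * exp (q * a) * (\<Prod>k\<in>K. exp (c2 k * Y k \<omega>))"
      by (simp only: prodexp)
    finally show "softmax_weight B x1 ((\<lambda>j. X j \<omega>)(1 := x1)) n 1 powr q
         \<le> 1 / m powr q * exp (q * a) * (\<Prod>k\<in>K. exp (c2 k * Y k \<omega>))" unfolding sw .
  qed simp
  also have "\<dots> = 1 / m powr q * exp (q * a) * exp (q\<^sup>2 / (2 * m) * s)"
    using sum_c2sq by simp
  finally have P2: "expectation (\<lambda>\<omega>. softmax_weight B x1 ((\<lambda>j. X j \<omega>)(1 := x1)) n 1 powr q)
      \<le> 1 / m powr q * exp (q * a) * exp (q\<^sup>2 / (2 * m) * s)" .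
  show ?thesis using P1 P2 unfolding m_def s_def u_def a_def by blast
qed

end
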